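(* Let $(Y,\|\ \|)$ be a normed $K$-vector space with an orthogonal basis $\{x_\ell\}_{\ell\in I}$ (i.e. $\|\sum c_\ell x_\ell\|=\sup_\ell|c_\ell|\,\|x_\ell\|$ for all vectors $\sum c_\ell x_\ell\in Y$), and let $\le$ be a partial order on $I$ such that every nonempty subset of $I$ has a minimal element and $\{\ell\in I:\ell\le k\}$ is finite for every $k\in I$. Suppose $\|x_\ell\|\le\|x_k\|$ whenever $\ell\le k$, and let $c_{\ell k}\in K$ with $|c_{\ell k}|\le1$ be given for all $\ell\le k$. Then the vectors $y_k:=x_k+\sum_{\ell<k}c_{\ell k}x_\ell$ ($k\in I$) form another orthogonal basis of $Y$, and $\|y_k\|=\|x_k\|$.
   Context: $K$ is a complete extension field of $\mathbb{Q}_p$ with absolute value $|\ |$. A basis means an algebraic basis of the vector space $Y$. *)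

theory Defs
  imports "HOL-Analysis.Analysis" "HOL-Computational_Algebra.Primes"
begin

text \<open>A complete non-archimedean valued field of characteristic 0 whose absolute value
  restricts to the (normalised) p-adic absolute value on the rationals, i.e. a complete
  extension field of Q_p.\<close>
definition complete_ext_Qp :: "('k::field_char_0 \<Rightarrow> real) \<Rightarrow> nat \<Rightarrow> bool" where
  "complete_ext_Qp absK p \<longleftrightarrow>
     prime p \<and>
     (\<forall>a. 0 \<le> absK a) \<and>
     (\<forall>a. absK a = 0 \<longleftrightarrow> a = 0) \<and>
     (\<forall>a b. absK (a * b) = absK a * absK b) \<and>
     (\<forall>a b. absK (a + b) \<le> max (absK a) (absK b)) \<and>
     absK (of_nat p) = 1 / real p \<and>
     (\<forall>f :: nat \<Rightarrow> 'k.
        (\<forall>e>0. \<exists>N. \<forall>m\<ge>N. \<forall>n\<ge>N. absK (f m - f n) < e) \<longrightarrow>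
        (\<exists>L. \<forall>e>0. \<exists>N. \<forall>n\<ge>N. absK (f n - L) < e))"

definition is_norm :: "('k::field \<Rightarrow> real) \<Rightarrow> ('k \<Rightarrow> 'v::ab_group_add \<Rightarrow> 'v) \<Rightarrow> ('v \<Rightarrow> real) \<Rightarrow> bool" where
  "is_norm absK smul nrm \<longleftrightarrow>
     (\<forall>v. 0 \<le> nrm v) \<and>
     (\<forall>v. nrm v = 0 \<longleftrightarrow> v = 0) \<and>
     (\<forall>a v. nrm (smul a v) = absK a * nrm v) \<and>
     (\<forall>v w. nrm (v + w) \<le> max (nrm v) (nrm w))"

definition is_basis_family :: "('k::field \<Rightarrow> 'v::ab_group_add \<Rightarrow> 'v) \<Rightarrow> ('i \<Rightarrow> 'v) \<Rightarrow> bool" where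
  "is_basis_family smul x \<longleftrightarrow>
     inj x \<and> \<not> module.dependent smul (range x) \<and> module.span smul (range x) = UNIV"

text \<open>Orthogonality: the norm of every finite linear combination is the sup of the
  norms of its terms (the sup over the remaining indices, with zero coefficient, is 0).\<close>
definition orthogonal_family ::
  "('k::field \<Rightarrow> real) \<Rightarrow> ('k \<Rightarrow> 'v::ab_group_add \<Rightarrow> 'v) \<Rightarrow> ('v \<Rightarrow> real) \<Rightarrow> ('i \<Rightarrow> 'v) \<Rightarrow> bool" where
  "orthogonal_family absK smul nrm x \<longleftrightarrow>
     (\<forall>F c. finite F \<longrightarrow>
        nrm (\<Sum>l\<in>F. smul (c l) (x l)) = Max (insert 0 ((\<lambda>l. absK (c l) * nrm (x l)) ` F)))"

definition orthogonal_basis ::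
  "('k::field \<Rightarrow> real) \<Rightarrow> ('k \<Rightarrow> 'v::ab_group_add \<Rightarrow> 'v) \<Rightarrow> ('v \<Rightarrow> real) \<Rightarrow> ('i \<Rightarrow> 'v) \<Rightarrow> bool" where
  "orthogonal_basis absK smul nrm x \<longleftrightarrow>
     is_basis_family smul x \<and> orthogonal_family absK smul nrm x"

end

theory Submission
  imports Defs
begin

lemma sum_bound:
  fixes absK :: "'k::field \<Rightarrow> real"
  assumes ultra: "\<And>a b. absK (a + b) \<le> max (absK a) (absK b)" and z: "absK 0 = 0"
    and w: "w \<ge> 0" and B: "B \<ge> 0" and fin: "finite S"
    and bd: "\<And>s. s \<in> S \<Longrightarrow> absK (f s) * w \<le> B"
  shows "absK (sum f S) * w \<le> B"
  using fin bd
proof (induction S rule: finite_induct)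
  case empty then show ?case using z B by simp
next
  case (insert s S)
  have "absK (sum f (insert s S)) * w = absK (f s + sum f S) * w" using insert by simp
  also have "\<dots> \<le> max (absK (f s)) (absK (sum f S)) * w" using ultra w mult_right_mono by blast
  also have "\<dots> = max (absK (f s) * w) (absK (sum f S) * w)" using w by (simp add: max_mult_distrib_right)
  also have "\<dots> \<le> B" using insert by simp
  finally show ?case .
qed
lemma sum_bound_strict:
  fixes absK :: "'k::field \<Rightarrow> real"
  assumes ultra: "\<And>a b. absK (a + b) \<le> max (absK a) (absK b)" and z: "absK 0 = 0"
    and w: "w \<ge> 0" and B: "B > 0" and fin: "finite S"
    and bd: "\<And>s. s \<in> S \<Longrightarrow> absK (f s) * w < B"
  shows "absK (sum f S) * w < B"
  using fin bd
proof (induction S rule: finite_induct)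
  case empty then show ?case using z B by simp
next
  case (insert s S)
  have "absK (sum f (insert s S)) * w = absK (f s + sum f S) * w" using insert by simp
  also have "\<dots> \<le> max (absK (f s)) (absK (sum f S)) * w" using ultra w mult_right_mono by blast
  also have "\<dots> = max (absK (f s) * w) (absK (sum f S) * w)" using w by (simp add: max_mult_distrib_right)
  also have "\<dots> < B" using insert by simp
  finally show ?case .
qed
lemma finite_maximal:
  assumes "finite S" "S \<noteq> {}"
    and antisym: "\<And>l k. le l k \<Longrightarrow> le k l \<Longrightarrow> l = k"
    and trans: "\<And>l k m. le l k \<Longrightarrow> le k m \<Longrightarrow> le l m"
  shows "\<exists>m\<in>S. \<forall>l\<in>S. le m l \<longrightarrow> l = m"
  using assms(1,2)
proof (induction S rule: finite_ne_induct)
  case (singleton x) then show ?case by simp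
next
  case (insert x F)
  then obtain m where m: "m \<in> F" "\<forall>l\<in>F. le m l \<longrightarrow> l = m" by blast
  show ?case
  proof (cases "le m x")
    case True
    have "\<forall>l\<in>insert x F. le x l \<longrightarrow> l = x"
    proof (intro ballI impI)
      fix l assume l: "l \<in> insert x F" and xl: "le x l"
      show "l = x"
      proof (cases "l = x")
        case False
        then have "l \<in> F" using l by simp
        moreover have "le m l" using trans[OF True xl] .
        ultimately have "l = m" using m(2) by blast
        then have "x = m" using antisym[OF xl[unfolded \<open>l = m\<close>] True] by simp
        then show ?thesis using \<open>l = m\<close> by simp
      qed simp
    qed
    then show ?thesis by blast
  next
    case False
    then show ?thesis using m by auto
  qed
qed
theorem lemma2p5:
  fixes absK :: "'k::field_char_0 \<Rightarrow> real" and p :: nat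
    and smul :: "'k \<Rightarrow> 'v::ab_group_add \<Rightarrow> 'v" and nrm :: "'v \<Rightarrow> real"
    and x :: "'i \<Rightarrow> 'v" and le :: "'i \<Rightarrow> 'i \<Rightarrow> bool"
    and c :: "'i \<Rightarrow> 'i \<Rightarrow> 'k"
  assumes K: "complete_ext_Qp absK p"
    and VS: "vector_space smul"
    and N: "is_norm absK smul nrm"
    and OB: "orthogonal_basis absK smul nrm x"
    and refl: "\<And>l. le l l"
    and antisym: "\<And>l k. le l k \<Longrightarrow> le k l \<Longrightarrow> l = k"
    and trans: "\<And>l k m. le l k \<Longrightarrow> le k m \<Longrightarrow> le l m"
    and minimal: "\<And>S. S \<noteq> {} \<Longrightarrow> \<exists>m\<in>S. \<forall>l\<in>S. le l m \<longrightarrow> l = m"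
    and fin_down: "\<And>k. finite {l. le l k}"
    and mono_norm: "\<And>l k. le l k \<Longrightarrow> nrm (x l) \<le> nrm (x k)"
    and c_bound: "\<And>l k. le l k \<Longrightarrow> absK (c l k) \<le> 1"
  shows "orthogonal_basis absK smul nrm
           (\<lambda>k. x k + (\<Sum>l\<in>{l. le l k \<and> l \<noteq> k}. smul (c l k) (x l)))
       \<and> (\<forall>k. nrm (x k + (\<Sum>l\<in>{l. le l k \<and> l \<noteq> k}. smul (c l k) (x l))) = nrm (x k))"
proof -
  interpret V: vector_space smul by (rule VS)
  have ultra: "\<And>a b. absK (a + b) \<le> max (absK a) (absK b)"
    and amul: "\<And>a b. absK (a * b) = absK a * absK b"
    and anonneg: "\<And>a. 0 \<le> absK a" and aeq0: "\<And>a. absK a = 0 \<longleftrightarrow> a = 0"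
    using K unfolding complete_ext_Qp_def by auto
  have nnonneg: "\<And>v. 0 \<le> nrm v" and neq0: "\<And>v. nrm v = 0 \<longleftrightarrow> v = 0"
    and nsmul: "\<And>a v. nrm (smul a v) = absK a * nrm v"
    using N unfolding is_norm_def by auto
  have injx: "inj x" and indx: "\<not> V.dependent (range x)" and spx: "V.span (range x) = UNIV"
    and orthx: "\<And>F c. finite F \<Longrightarrow>
        nrm (\<Sum>l\<in>F. smul (c l) (x l)) = Max (insert 0 ((\<lambda>l. absK (c l) * nrm (x l)) ` F))"
    using OB unfolding orthogonal_basis_def is_basis_family_def orthogonal_family_def by auto
  have n0: "nrm 0 = 0" using neq0 by simp
  have a0: "absK 0 = 0" using aeq0 by simp
  have a1: "absK 1 = 1"
  proof -
    have "absK 1 = absK 1 * absK 1" using amul[of 1 1] by simp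
    moreover have "absK 1 \<noteq> 0" using aeq0 by simp
    ultimately show ?thesis by simp
  qed
  have am1: "absK (-1) = 1"
  proof -
    have "absK (-1) * absK (-1) = 1" using amul[of "-1" "-1"] a1 by simp
    then show ?thesis using anonneg[of "-1"]
      using power2_eq_imp_eq[of "absK (-1)" 1] by (simp add: power2_eq_square)
  qed
  have aneg: "\<And>a. absK (- a) = absK a" using amul[of "-1"] am1 by simp
  have xpos: "\<And>k. nrm (x k) > 0"
  proof -
    fix k
    have "x k \<noteq> 0" using indx V.dependent_zero by (metis rangeI)
    then show "nrm (x k) > 0" using nnonneg neq0 by (metis less_eq_real_def)
  qed
  define y where "y = (\<lambda>k. x k + (\<Sum>l\<in>{l. le l k \<and> l \<noteq> k}. smul (c l k) (x l)))"
  define D where "D = (\<lambda>k. {l. le l k})"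
  define e where "e = (\<lambda>l k. if l = k then (1::'k) else if le l k then c l k else 0)"
  have finD: "\<And>k. finite (D k)" using fin_down D_def by simp
  have yrep: "y k = (\<Sum>l\<in>G. smul (e l k) (x l))" if G: "finite G" "D k \<subseteq> G" for k G
  proof -
    have "(\<Sum>l\<in>G. smul (e l k) (x l)) = (\<Sum>l\<in>D k. smul (e l k) (x l))"
      by (rule sum.mono_neutral_right[OF G(1) G(2)]) (auto simp: e_def D_def refl)
    also have "D k = insert k {l. le l k \<and> l \<noteq> k}" using refl D_def by auto
    also have "(\<Sum>l\<in>insert k {l. le l k \<and> l \<noteq> k}. smul (e l k) (x l))
       = smul (e k k) (x k) + (\<Sum>l\<in>{l. le l k \<and> l \<noteq> k}. smul (e l k) (x l))"
      using fin_down[of k] by (intro sum.insert) auto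
    also have "(\<Sum>l\<in>{l. le l k \<and> l \<noteq> k}. smul (e l k) (x l))
       = (\<Sum>l\<in>{l. le l k \<and> l \<noteq> k}. smul (c l k) (x l))"
      by (rule sum.cong) (auto simp: e_def)
    finally show ?thesis by (simp add: y_def e_def)
  qed
  have orthy: "nrm (\<Sum>k\<in>F. smul (a k) (y k)) = Max (insert 0 ((\<lambda>k. absK (a k) * nrm (x k)) ` F))"
    if finF: "finite F" for F a
  proof -
    define G where "G = (\<Union>k\<in>F. D k)"
    define b where "b = (\<lambda>l. \<Sum>k\<in>F. a k * e l k)"
    have finG: "finite G" unfolding G_def using finF finD by blast
    have "(\<Sum>k\<in>F. smul (a k) (y k)) = (\<Sum>k\<in>F. smul (a k) (\<Sum>l\<in>G. smul (e l k) (x l)))"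
      by (rule sum.cong[OF HOL.refl]) (subst yrep[OF finG], auto simp: G_def)
    also have "\<dots> = (\<Sum>k\<in>F. \<Sum>l\<in>G. smul (a k * e l k) (x l))"
      by (simp add: V.scale_sum_right)
    also have "\<dots> = (\<Sum>l\<in>G. \<Sum>k\<in>F. smul (a k * e l k) (x l))"
      by (rule sum.swap)
    also have "\<dots> = (\<Sum>l\<in>G. smul (b l) (x l))"
      by (simp add: b_def V.scale_sum_left)
    finally have eq: "nrm (\<Sum>k\<in>F. smul (a k) (y k)) = Max (insert 0 ((\<lambda>l. absK (b l) * nrm (x l)) ` G))"
      using orthx[OF finG] by simp
    define M where "M = Max (insert 0 ((\<lambda>k. absK (a k) * nrm (x k)) ` F))"
    have finM: "finite (insert 0 ((\<lambda>k. absK (a k) * nrm (x k)) ` F))" using finF by simp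
    have M0: "M \<ge> 0" unfolding M_def using finM by (rule Max_ge) simp
    have Mge: "absK (a k) * nrm (x k) \<le> M" if "k \<in> F" for k
      unfolding M_def using finM that by (intro Max_ge) auto
    have finL: "finite (insert 0 ((\<lambda>l. absK (b l) * nrm (x l)) ` G))" using finG by simp
    have ub: "absK (b l) * nrm (x l) \<le> M" for l
    proof -
      show "absK (b l) * nrm (x l) \<le> M" unfolding b_def
      proof (rule sum_bound[OF ultra a0 nnonneg M0 finF])
        fix k assume k: "k \<in> F"
        show "absK (a k * e l k) * nrm (x l) \<le> M"
        proof (cases "le l k")
          case True
          have e1: "absK (e l k) \<le> 1" using c_bound[OF True] a1 a0 by (simp add: e_def)
          have "absK (a k * e l k) * nrm (x l) = absK (a k) * (absK (e l k) * nrm (x l))"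
            by (simp add: amul)
          also have "\<dots> \<le> absK (a k) * (1 * nrm (x k))"
            using e1 mono_norm[OF True] anonneg nnonneg
            by (intro mult_left_mono mult_mono) auto
          also have "\<dots> \<le> M" using Mge[OF k] by simp
          finally show ?thesis .
        next
          case False
          then have "e l k = 0" using refl by (auto simp: e_def)
          then show ?thesis using a0 M0 by simp
        qed
      qed
    qed
    have up: "Max (insert 0 ((\<lambda>l. absK (b l) * nrm (x l)) ` G)) \<le> M"
      using ub M0 finL by (simp add: Max_le_iff)
    have low: "M \<le> Max (insert 0 ((\<lambda>l. absK (b l) * nrm (x l)) ` G))"
    proof (cases "M = 0")
      case True
      then show ?thesis using finL by (intro Max_ge) auto
    next
      case False
      then have Mpos: "M > 0" using M0 by simp
      have "M \<in> insert 0 ((\<lambda>k. absK (a k) * nrm (x k)) ` F)" unfolding M_def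
        using finM by (rule Max_in) simp
      then obtain k1 where k1: "k1 \<in> F" "absK (a k1) * nrm (x k1) = M" using False by auto
      define S where "S = {k \<in> F. absK (a k) * nrm (x k) = M}"
      have "S \<noteq> {}" "finite S" using k1 finF by (auto simp: S_def)
      have "\<exists>m\<in>S. \<forall>l\<in>S. le m l \<longrightarrow> l = m"
        by (rule finite_maximal[of S le, OF \<open>finite S\<close> \<open>S \<noteq> {}\<close> antisym trans])
      then obtain k0 where k0S: "k0 \<in> S" and k0max: "\<forall>l\<in>S. le k0 l \<longrightarrow> l = k0"
        by blast
      have k0F: "k0 \<in> F" and k0M: "absK (a k0) * nrm (x k0) = M" using k0S by (auto simp: S_def)
      define r where "r = (\<Sum>k\<in>F - {k0}. a k * e k0 k)"
      have bk0: "b k0 = a k0 + r"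
        unfolding b_def r_def using finF k0F by (simp add: sum.remove e_def)
      have rlt: "absK r * nrm (x k0) < M" unfolding r_def
      proof (rule sum_bound_strict[OF ultra a0 nnonneg Mpos])
        show "finite (F - {k0})" using finF by simp
      next
        fix k assume k: "k \<in> F - {k0}"
        show "absK (a k * e k0 k) * nrm (x k0) < M"
        proof (cases "le k0 k")
          case True
          have "k \<notin> S" using k0max k True by auto
          then have lt: "absK (a k) * nrm (x k) < M" using Mge[of k] k by (auto simp: S_def)
          have e1: "absK (e k0 k) \<le> 1" using c_bound[OF True] a1 a0 by (simp add: e_def)
          have "absK (a k * e k0 k) * nrm (x k0) = absK (a k) * (absK (e k0 k) * nrm (x k0))"
            by (simp add: amul)
          also have "\<dots> \<le> absK (a k) * (1 * nrm (x k))"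
            using e1 mono_norm[OF True] anonneg nnonneg
            by (intro mult_left_mono mult_mono) auto
          also have "\<dots> < M" using lt by simp
          finally show ?thesis .
        next
          case False
          then have "e k0 k = 0" using k by (auto simp: e_def)
          then show ?thesis using a0 Mpos by simp
        qed
      qed
      have "absK (a k0) \<le> max (absK (b k0)) (absK (- r))"
        using ultra[of "b k0" "- r"] bk0 by simp
      then have "absK (a k0) * nrm (x k0) \<le> max (absK (b k0)) (absK r) * nrm (x k0)"
        by (intro mult_right_mono) (simp_all add: aneg nnonneg)
      then have "M \<le> max (absK (b k0)) (absK r) * nrm (x k0)" using k0M by simp
      also have "\<dots> = max (absK (b k0) * nrm (x k0)) (absK r * nrm (x k0))"
        using nnonneg by (simp add: max_mult_distrib_right)
      finally have "M \<le> absK (b k0) * nrm (x k0)" using rlt by linarith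
      also have "\<dots> \<le> Max (insert 0 ((\<lambda>l. absK (b l) * nrm (x l)) ` G))"
        using finL k0F refl by (intro Max_ge) (auto simp: G_def D_def)
      finally show ?thesis .
    qed
    show ?thesis using eq up low M_def by simp
  qed
  have ny: "nrm (y k) = nrm (x k)" for k
    using orthy[of "{k}" "\<lambda>_. 1"] a1 nnonneg[of "x k"] by simp
  have orthfy: "orthogonal_family absK smul nrm y"
    unfolding orthogonal_family_def using orthy ny by simp
  have injy: "inj y"
  proof (rule injI)
    fix k j assume kj: "y k = y j"
    show "k = j"
    proof (rule ccontr)
      assume nkj: "k \<noteq> j"
      have "(\<Sum>i\<in>{k,j}. smul (if i = k then 1 else -1) (y i)) = y k - y j"
        using nkj by (simp add: V.scale_minus_left)
      also have "\<dots> = 0" using kj by simp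
      finally have z: "(\<Sum>i\<in>{k,j}. smul (if i = k then 1 else -1) (y i)) = 0" .
      have "nrm (\<Sum>i\<in>{k,j}. smul (if i = k then 1 else -1) (y i))
          = Max (insert 0 ((\<lambda>i. absK (if i = k then 1 else -1) * nrm (x i)) ` {k,j}))"
        by (rule orthy) simp
      then have "0 = Max (insert 0 ((\<lambda>i. absK (if i = k then 1 else -1) * nrm (x i)) ` {k,j}))"
        using neq0[of 0] by (simp only: z simp_thms)
      also have "\<dots> \<ge> absK (if k = k then 1 else -1) * nrm (x k)"
        by (intro Max_ge) auto
      finally show False using a1 xpos[of k] by simp
    qed
  qed
  have indy: "\<not> V.dependent (range y)"
  proof
    assume "V.dependent (range y)"
    then obtain t u where t: "finite t" "t \<subseteq> range y" "(\<Sum>v\<in>t. smul (u v) v) = 0"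
      "\<exists>v\<in>t. u v \<noteq> 0"
      unfolding V.dependent_explicit by blast
    define F where "F = y -` t"
    have tF: "t = y ` F" using t(2) F_def by auto
    have finF: "finite F" unfolding F_def using t(1) injy by (simp add: finite_vimageI)
    have injF: "inj_on y F" using inj_on_subset[OF injy subset_UNIV] .
    have "(\<Sum>v\<in>t. smul (u v) v) = (\<Sum>k\<in>F. smul (u (y k)) (y k))"
      unfolding tF by (subst sum.reindex[OF injF]) simp
    then have "0 = Max (insert 0 ((\<lambda>k. absK (u (y k)) * nrm (x k)) ` F))"
      using orthy[OF finF, of "\<lambda>k. u (y k)"] t(3) n0 by simp
    moreover obtain k0 where k0: "k0 \<in> F" "u (y k0) \<noteq> 0" using t(4) tF by auto
    moreover have "absK (u (y k0)) * nrm (x k0) > 0"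
    proof -
      have "absK (u (y k0)) > 0" using anonneg[of "u (y k0)"] aeq0[of "u (y k0)"] k0(2) by linarith
      then show ?thesis using xpos[of k0] by simp
    qed
    moreover have "absK (u (y k0)) * nrm (x k0) \<le> Max (insert 0 ((\<lambda>k. absK (u (y k)) * nrm (x k)) ` F))"
      using finF k0(1) by (intro Max_ge) auto
    ultimately show False by linarith
  qed
  have xin_n: "\<forall>k. card (D k) = n \<longrightarrow> x k \<in> V.span (range y)" for n
  proof (induction n rule: less_induct)
    case (less n)
    show ?case
    proof (intro allI impI)
      fix k assume cn: "card (D k) = n"
      have eqk: "x k = y k - (\<Sum>l\<in>{l. le l k \<and> l \<noteq> k}. smul (c l k) (x l))"
        by (simp add: y_def)
      have s2: "(\<Sum>l\<in>{l. le l k \<and> l \<noteq> k}. smul (c l k) (x l)) \<in> V.span (range y)"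
      proof (rule V.span_sum)
        fix l assume l: "l \<in> {l. le l k \<and> l \<noteq> k}"
        have sub: "D l \<subseteq> D k" using l trans by (auto simp: D_def)
        have kin: "k \<in> D k" "k \<notin> D l" using l refl antisym by (auto simp: D_def)
        have "D l \<subset> D k" using sub kin by blast
        then have "card (D l) < n" using psubset_card_mono[OF finD] cn by blast
        then have "x l \<in> V.span (range y)" using less by blast
        then show "smul (c l k) (x l) \<in> V.span (range y)" by (rule V.span_scale)
      qed
      have s1: "y k \<in> V.span (range y)" by (rule V.span_base) simp
      have "y k - (\<Sum>l\<in>{l. le l k \<and> l \<noteq> k}. smul (c l k) (x l)) \<in> V.span (range y)"
        by (rule V.span_diff[OF s1 s2])
      then show "x k \<in> V.span (range y)" using eqk by simp
    qed
  qed
  have spy: "V.span (range y) = UNIV"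
  proof -
    have "V.span (range x) \<subseteq> V.span (range y)"
      by (rule V.span_minimal) (use xin_n in auto)
    then show ?thesis using spx by auto
  qed
  have "orthogonal_basis absK smul nrm y \<and> (\<forall>k. nrm (y k) = nrm (x k))"
    unfolding orthogonal_basis_def is_basis_family_def using injy indy spy orthfy ny by simp
  then show ?thesis unfolding y_def .
qed

end
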